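(* Let $k>0$. On $\mathbb{C}\times\mathcal{D}_1$ consider the system $$2k\ddot z-\bar\eta\dot z^2+2\Big(2k\frac{\bar w}{P}-\bar\eta^2\Big)\dot z\dot w-\bar\eta^3\dot w^2=0,\qquad 2k\ddot w+\dot z^2+2\bar\eta\dot z\dot w+\Big(4k\frac{\bar w}{P}+\bar\eta^2\Big)\dot w^2=0,$$ where $P=1-|w|^2$ and $\eta=\frac{z+\bar zw}{1-|w|^2}$. For any $\eta_0\in\mathbb{C}$ and $B\in\mathbb{C}\setminus\{0\}$, the curve $w(t)=B\,\frac{\tanh(t|B|)}{|B|}$, $z(t)=\eta_0-w(t)\bar\eta_0$ is a solution of this system (along it $\eta(t)\equiv\eta_0$ is constant).
   Context: $\mathcal{D}_1=\{w\in\mathbb{C}:|w|<1\}$. The displayed system is the geodesic equation of the Kähler metric on the Siegel–Jacobi disk with Kähler form $\omega_1=\mathrm{i}\big[\frac{2k}{(1-|w|^2)^2}dw\wedge d\bar w+\frac{A\wedge\bar A}{1-|w|^2}\big]$, $A=dz+\bar\eta dw$. *)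

theory Defs
  imports "HOL-Analysis.Analysis"
begin

definition Pfun :: "complex \<Rightarrow> complex" where
  "Pfun w = 1 - complex_of_real ((cmod w)\<^sup>2)"

definition eta :: "complex \<Rightarrow> complex \<Rightarrow> complex" where
  "eta z w = (z + cnj z * w) / Pfun w"

text \<open>The geodesic system, evaluated at position (z,w), velocity (z1,w1), acceleration (z2,w2).\<close>
definition geod_eq1 :: "real \<Rightarrow> complex \<Rightarrow> complex \<Rightarrow> complex \<Rightarrow> complex \<Rightarrow> complex \<Rightarrow> complex \<Rightarrow> bool" where
  "geod_eq1 k z w z1 w1 z2 w2 \<longleftrightarrow>
     (let eb = cnj (eta z w); P = Pfun w in
      2 * of_real k * z2 - eb * z1\<^sup>2 + 2 * (2 * of_real k * cnj w / P - eb\<^sup>2) * z1 * w1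
        - eb ^ 3 * w1\<^sup>2 = 0)"

definition geod_eq2 :: "real \<Rightarrow> complex \<Rightarrow> complex \<Rightarrow> complex \<Rightarrow> complex \<Rightarrow> complex \<Rightarrow> complex \<Rightarrow> bool" where
  "geod_eq2 k z w z1 w1 z2 w2 \<longleftrightarrow>
     (let eb = cnj (eta z w); P = Pfun w in
      2 * of_real k * w2 + z1\<^sup>2 + 2 * eb * z1 * w1
        + (4 * of_real k * cnj w / P + eb\<^sup>2) * w1\<^sup>2 = 0)"

end

theory Submission imports Defs begin

lemma d1: fixes r::real assumes "r>0" shows "((\<lambda>t. tanh (t*r)/r) has_real_derivative (1 - tanh (t*r)^2)) (at t)"
  using assms by (auto intro!: derivative_eq_intros)
lemma d2: fixes r::real shows "((\<lambda>t. 1 - tanh (t*r)^2) has_real_derivative (-2*r*tanh(t*r)*(1 - tanh (t*r)^2))) (at t)"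
  by (auto intro!: derivative_eq_intros)

theorem mainTheorem5:
  fixes k :: real and eta0 B :: complex
  assumes "k > 0" and "B \<noteq> 0"
  defines "w \<equiv> (\<lambda>t::real. B * complex_of_real (tanh (t * cmod B) / cmod B))"
  defines "z \<equiv> (\<lambda>t::real. eta0 - w t * cnj eta0)"
  shows "(\<forall>t. cmod (w t) < 1) \<and>
    (\<exists>z1 w1 z2 w2 :: real \<Rightarrow> complex.
      (\<forall>t. (z has_vector_derivative z1 t) (at t) \<and> (z1 has_vector_derivative z2 t) (at t) \<and>
           (w has_vector_derivative w1 t) (at t) \<and> (w1 has_vector_derivative w2 t) (at t) \<and>
           geod_eq1 k (z t) (w t) (z1 t) (w1 t) (z2 t) (w2 t) \<and>
           geod_eq2 k (z t) (w t) (z1 t) (w1 t) (z2 t) (w2 t))) \<and>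
    (\<forall>t. eta (z t) (w t) = eta0)"
proof -
  define r where "r = cmod B"
  have r: "r > 0" using assms(2) by (simp add: r_def)
  define th where "th = (\<lambda>t. tanh (t*r))"
  have thb: "\<bar>th t\<bar> < 1" for t
    using tanh_real_bounds[of "t*r"] by (auto simp: th_def abs_less_iff)
  have cw: "cmod (w t) = \<bar>th t\<bar>" for t
    using r by (simp add: w_def r_def[symmetric] th_def norm_mult norm_divide)
  have BB: "cnj B * B = of_real (r^2)"
    unfolding r_def complex_norm_square by (simp add: mult.commute)
  have P: "Pfun (w t) = of_real (1 - th t ^ 2)" for t
    by (simp add: Pfun_def cw)
  have Pnz: "Pfun (w t) \<noteq> 0" for t
  proof -
    have "th t ^ 2 < 1" using thb[of t] by (simp add: abs_square_less_1)
    then have "1 - th t ^ 2 \<noteq> 0" by simp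
    then show ?thesis unfolding P of_real_eq_0_iff .
  qed
  have etaeq: "eta (z t) (w t) = eta0" for t
  proof -
    have "z t + cnj (z t) * w t = eta0 * Pfun (w t)"
      unfolding z_def Pfun_def complex_norm_square by (simp add: algebra_simps)
    then show ?thesis using Pnz[of t] by (simp add: eta_def)
  qed
  define w1 where "w1 = (\<lambda>t. B * of_real (1 - th t ^ 2))"
  define w2 where "w2 = (\<lambda>t. B * of_real (-2*r*th t*(1 - th t ^ 2)))"
  define z1 where "z1 = (\<lambda>t. - w1 t * cnj eta0)"
  define z2 where "z2 = (\<lambda>t. - w2 t * cnj eta0)"
  have dw: "(w has_vector_derivative w1 t) (at t)" for t
    unfolding w_def w1_def th_def r_def[symmetric]
    by (intro has_vector_derivative_mult_right has_vector_derivative_of_real d1 r)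
  have dw1: "(w1 has_vector_derivative w2 t) (at t)" for t
    unfolding w1_def w2_def th_def
    by (intro has_vector_derivative_mult_right has_vector_derivative_of_real d2)
  have dz: "(z has_vector_derivative z1 t) (at t)" for t
    unfolding z_def z1_def
    using has_vector_derivative_diff[OF has_vector_derivative_const
        has_vector_derivative_mult_left[OF dw[of t], of "cnj eta0"]]
    by simp
  have dz1: "(z1 has_vector_derivative z2 t) (at t)" for t
    unfolding z1_def z2_def
    using has_vector_derivative_minus[OF has_vector_derivative_mult_left[OF dw1[of t], of "cnj eta0"]]
    by simp
  have alg: "\<And>(c::complex) sv rr. sv \<noteq> 0 \<Longrightarrow> rr \<noteq> 0 \<Longrightarrow> cnj B * B = rr^2 \<Longrightarrow>
     B * (-2 * rr * c * sv) + 2 * (cnj B * (c / rr)) * (B * sv)^2 / sv = 0"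
    by (simp add: field_simps power2_eq_square)
  have key: "w2 t + 2 * cnj (w t) * (w1 t)^2 / Pfun (w t) = 0" for t
  proof -
    have "cnj (w t) = cnj B * (of_real (th t) / of_real r)"
      by (simp add: w_def th_def r_def)
    moreover have "cnj B * B = (of_real r)^2" using BB by simp
    moreover have "(of_real r::complex) \<noteq> 0" using r by simp
    ultimately show ?thesis using alg[of "of_real (1 - th t ^ 2)" "of_real r" "of_real (th t)"] Pnz[of t]
      unfolding w1_def w2_def P by simp
  qed
  have e1: "geod_eq1 k (z t) (w t) (z1 t) (w1 t) (z2 t) (w2 t)" for t
  proof -
    have "2 * of_real k * z2 t - cnj eta0 * (z1 t)\<^sup>2 + 2 * (2 * of_real k * cnj (w t) / Pfun (w t) - (cnj eta0)\<^sup>2) * z1 t * w1 t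
        - cnj eta0 ^ 3 * (w1 t)\<^sup>2 = - cnj eta0 * (2 * of_real k) * (w2 t + 2 * cnj (w t) * (w1 t)^2 / Pfun (w t))"
      by (simp add: z1_def z2_def power2_eq_square power3_eq_cube algebra_simps)
    then show ?thesis unfolding geod_eq1_def Let_def etaeq key by simp
  qed
  have e2: "geod_eq2 k (z t) (w t) (z1 t) (w1 t) (z2 t) (w2 t)" for t
  proof -
    have "2 * of_real k * w2 t + (z1 t)\<^sup>2 + 2 * cnj eta0 * z1 t * w1 t
        + (4 * of_real k * cnj (w t) / Pfun (w t) + (cnj eta0)\<^sup>2) * (w1 t)\<^sup>2 = (2 * of_real k) * (w2 t + 2 * cnj (w t) * (w1 t)^2 / Pfun (w t))"
      by (simp add: z1_def power2_eq_square algebra_simps)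
    then show ?thesis unfolding geod_eq2_def Let_def etaeq key by simp
  qed
  show ?thesis
    using cw thb dw dw1 dz dz1 e1 e2 etaeq by metis
qed

end
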